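(* Every factor-critical edge-stable equimatchable graph is 2-connected.
   Context: All graphs are finite and simple. A graph is equimatchable if all its maximal matchings have the same cardinality; an equimatchable graph $G$ is edge-stable if $G\setminus e$ (delete edge $e$, keep vertices) is equimatchable for every $e\in E(G)$. A graph $G$ is factor-critical if $G-v$ has a perfect matching for every $v\in V(G)$. *)

theory Defs
  imports Main
begin

definition simple_graph :: "'a set \<Rightarrow> 'a set set \<Rightarrow> bool" where
  "simple_graph V E \<longleftrightarrow> finite V \<and>
     (\<forall>e\<in>E. \<exists>u v. e = {u, v} \<and> u \<noteq> v \<and> u \<in> V \<and> v \<in> V)"

definition matching :: "'a set set \<Rightarrow> 'a set set \<Rightarrow> bool" where
  "matching E M \<longleftrightarrow> M \<subseteq> E \<and> (\<forall>e1\<in>M. \<forall>e2\<in>M. e1 \<noteq> e2 \<longrightarrow> e1 \<inter> e2 = {})"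

definition maximal_matching :: "'a set set \<Rightarrow> 'a set set \<Rightarrow> bool" where
  "maximal_matching E M \<longleftrightarrow> matching E M \<and>
     (\<forall>M'. matching E M' \<and> M \<subseteq> M' \<longrightarrow> M' = M)"

definition equimatchable :: "'a set \<Rightarrow> 'a set set \<Rightarrow> bool" where
  "equimatchable V E \<longleftrightarrow>
     (\<forall>M1 M2. maximal_matching E M1 \<and> maximal_matching E M2 \<longrightarrow> card M1 = card M2)"

definition edge_stable :: "'a set \<Rightarrow> 'a set set \<Rightarrow> bool" where
  "edge_stable V E \<longleftrightarrow> equimatchable V E \<and> (\<forall>e\<in>E. equimatchable V (E - {e}))"

definition induced_edges :: "'a set set \<Rightarrow> 'a set \<Rightarrow> 'a set set" where
  "induced_edges E W = {e\<in>E. e \<subseteq> W}"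

definition perfect_matching :: "'a set \<Rightarrow> 'a set set \<Rightarrow> 'a set set \<Rightarrow> bool" where
  "perfect_matching V E M \<longleftrightarrow> matching E M \<and> \<Union>M = V"

definition factor_critical :: "'a set \<Rightarrow> 'a set set \<Rightarrow> bool" where
  "factor_critical V E \<longleftrightarrow>
     (\<forall>v\<in>V. \<exists>M. perfect_matching (V - {v}) (induced_edges E (V - {v})) M)"

definition adj :: "'a set set \<Rightarrow> 'a \<Rightarrow> 'a \<Rightarrow> bool" where
  "adj E u v \<longleftrightarrow> {u, v} \<in> E"

definition connected :: "'a set \<Rightarrow> 'a set set \<Rightarrow> bool" where
  "connected V E \<longleftrightarrow> V \<noteq> {} \<and> (\<forall>u\<in>V. \<forall>v\<in>V. (adj E)\<^sup>*\<^sup>* u v)"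

definition two_connected :: "'a set \<Rightarrow> 'a set set \<Rightarrow> bool" where
  "two_connected V E \<longleftrightarrow> card V \<ge> 3 \<and> connected V E \<and>
     (\<forall>x\<in>V. connected (V - {x}) (induced_edges E (V - {x})))"

end

theory Submission imports Defs begin

lemma sg_edge:
  assumes "simple_graph V E" "e \<in> E"
  shows "\<exists>u v. e = {u, v} \<and> u \<noteq> v \<and> u \<in> V \<and> v \<in> V"
  using assms unfolding simple_graph_def by blast

lemma sg_finE:
  assumes "simple_graph V E" shows "finite E"
proof -
  have "E \<subseteq> Pow V"
  proof
    fix e assume "e \<in> E"
    then obtain u v where "e = {u, v}" "u \<in> V" "v \<in> V" using assms unfolding simple_graph_def by meson
    then show "e \<in> Pow V" by simp
  qed
  moreover have "finite V" using assms unfolding simple_graph_def by blast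
  ultimately show ?thesis using finite_Pow_iff[of V] by (metis finite_subset)
qed

lemma card_union_matching:
  assumes sg: "simple_graph V E" and m: "matching E M"
  shows "card (\<Union>M) = 2 * card M"
proof -
  have ME: "M \<subseteq> E" using m unfolding matching_def by blast
  have fin: "finite M" using ME sg_finE[OF sg] by (rule finite_subset)
  have c2: "\<And>e. e \<in> M \<Longrightarrow> card e = 2" using sg_edge[OF sg] ME by fastforce
  have "pairwise disjnt M" using m unfolding matching_def pairwise_def disjnt_def by blast
  moreover have "\<And>e. e \<in> M \<Longrightarrow> finite e" using sg_edge[OF sg] ME by fastforce
  ultimately have "card (\<Union>M) = sum card M" by (rule card_Union_disjoint)
  also have "\<dots> = sum (\<lambda>_. 2) M" using c2 by simp
  also have "\<dots> = 2 * card M" by simp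
  finally show ?thesis .
qed

lemma matching_subset: "matching E M \<Longrightarrow> M' \<subseteq> M \<Longrightarrow> matching E M'"
  unfolding matching_def by blast

lemma pm_edge:
  assumes "simple_graph V E" "perfect_matching S (induced_edges E S) M" "e \<in> M"
  shows "\<exists>u v. e = {u, v} \<and> u \<noteq> v \<and> e \<subseteq> S \<and> e \<in> E"
proof -
  have "e \<in> induced_edges E S" using assms(2,3) unfolding perfect_matching_def matching_def by blast
  then have eE: "e \<in> E" and eS: "e \<subseteq> S" unfolding induced_edges_def by auto
  obtain u v where "e = {u, v}" "u \<noteq> v" using sg_edge[OF assms(1) eE] by blast
  then show ?thesis using eE eS by blast
qed

lemma pm_matching:
  assumes "perfect_matching S (induced_edges E S) M"
  shows "matching E M"
  using assms unfolding perfect_matching_def matching_def induced_edges_def by blast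

lemma pm_disj:
  assumes "perfect_matching S F M" "e1 \<in> M" "e2 \<in> M" "e1 \<noteq> e2"
  shows "e1 \<inter> e2 = {}"
  using assms unfolding perfect_matching_def matching_def by blast

lemma pm_cover:
  assumes "perfect_matching S F M" "v \<in> S"
  shows "\<exists>e\<in>M. v \<in> e"
  using assms unfolding perfect_matching_def by blast

lemma pm_sub:
  assumes "perfect_matching S F M" "e \<in> M"
  shows "e \<subseteq> S"
  using assms unfolding perfect_matching_def by blast

lemma evenA:
  assumes sg: "simple_graph V E"
    and pm: "perfect_matching (V - {x}) (induced_edges E (V - {x})) Mx"
    and AB: "A \<union> B = V - {x}" "A \<inter> B = {}"
    and noedge: "\<And>u v. {u, v} \<in> E \<Longrightarrow> u \<in> A \<Longrightarrow> v \<in> B \<Longrightarrow> False"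
  shows "even (card A)"
proof -
  have "A = \<Union>{e\<in>Mx. e \<subseteq> A}"
  proof
    show "\<Union>{e\<in>Mx. e \<subseteq> A} \<subseteq> A" by blast
    show "A \<subseteq> \<Union>{e\<in>Mx. e \<subseteq> A}"
    proof
      fix v assume v: "v \<in> A"
      then obtain e where e: "e \<in> Mx" "v \<in> e" using pm_cover[OF pm] AB by blast
      obtain p q where pq: "e = {p, q}" "e \<subseteq> V - {x}" "e \<in> E" using pm_edge[OF sg pm e(1)] by blast
      have "e \<subseteq> A"
      proof (cases "v = p")
        case True
        then show ?thesis using pq AB v noedge[of p q] by blast
      next
        case False
        then have "v = q" using e pq by blast
        moreover have "{q, p} \<in> E" using pq(1,3) by (simp add: insert_commute)
        ultimately show ?thesis using pq(1,2) AB v noedge[of q p] by blast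
      qed
      then show "v \<in> \<Union>{e\<in>Mx. e \<subseteq> A}" using e by blast
    qed
  qed
  then have "card A = 2 * card {e\<in>Mx. e \<subseteq> A}"
  proof -
    have m: "matching E {e\<in>Mx. e \<subseteq> A}" by (rule matching_subset[OF pm_matching[OF pm]]) blast
    assume h: "A = \<Union>{e\<in>Mx. e \<subseteq> A}"
    show ?thesis using card_union_matching[OF sg m] h by simp
  qed
  then show ?thesis by simp
qed

lemma partner:
  assumes sg: "simple_graph V E"
    and pm: "perfect_matching (V - {a}) (induced_edges E (V - {a})) Ma"
    and a: "a \<in> A" and xz: "{x, z} \<in> Ma" "z \<noteq> x"
    and AB: "A \<union> B = V - {x}" "A \<inter> B = {}"
    and noedge: "\<And>u v. {u, v} \<in> E \<Longrightarrow> u \<in> A \<Longrightarrow> v \<in> B \<Longrightarrow> False"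
    and ev: "even (card A)" and fin: "finite V"
  shows "z \<in> A"
proof (rule ccontr)
  assume nz: "z \<notin> A"
  have zV: "z \<in> V - {a}" using pm_sub[OF pm xz(1)] by blast
  have xV: "x \<in> V - {a}" using pm_sub[OF pm xz(1)] by blast
  have zB: "z \<in> B" using zV nz xz AB by blast
  have "A - {a} = \<Union>{e\<in>Ma. e \<subseteq> A}"
  proof
    show "\<Union>{e\<in>Ma. e \<subseteq> A} \<subseteq> A - {a}" using pm_sub[OF pm] by blast
    show "A - {a} \<subseteq> \<Union>{e\<in>Ma. e \<subseteq> A}"
    proof
      fix v assume v: "v \<in> A - {a}"
      then obtain e where e: "e \<in> Ma" "v \<in> e" using pm_cover[OF pm] AB by blast
      obtain p q where pq: "e = {p, q}" "e \<subseteq> V - {a}" "e \<in> E" using pm_edge[OF sg pm e(1)] by blast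
      have xe: "x \<notin> e"
      proof
        assume "x \<in> e"
        then have "e = {x, z}" using pm_disj[OF pm e(1) xz(1)] by blast
        then show False using e v zB AB by blast
      qed
      have "e \<subseteq> A"
      proof (cases "v = p")
        case True
        then show ?thesis using pq AB v noedge[of p q] xe by blast
      next
        case False
        then have "v = q" using e pq by blast
        moreover have "{q, p} \<in> E" using pq(1,3) by (simp add: insert_commute)
        ultimately show ?thesis using pq(1,2) AB v noedge[of q p] xe by blast
      qed
      then show "v \<in> \<Union>{e\<in>Ma. e \<subseteq> A}" using e by blast
    qed
  qed
  then have "card (A - {a}) = 2 * card {e\<in>Ma. e \<subseteq> A}"
  proof -
    have m: "matching E {e\<in>Ma. e \<subseteq> A}" by (rule matching_subset[OF pm_matching[OF pm]]) blast
    assume h: "A - {a} = \<Union>{e\<in>Ma. e \<subseteq> A}"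
    show ?thesis using card_union_matching[OF sg m] h by simp
  qed
  moreover have "finite A"
  proof (rule finite_subset[OF _ fin])
    show "A \<subseteq> V" using AB by blast
  qed
  ultimately have "card A = 2 * card {e\<in>Ma. e \<subseteq> A} + 1"
  proof -
    assume h1: "card (A - {a}) = 2 * card {e\<in>Ma. e \<subseteq> A}" and h2: "finite A"
    have "card (A - {a}) = card A - 1" using a by simp
    moreover have "card A > 0" using h2 a by (auto simp: card_gt_0_iff)
    ultimately show ?thesis using h1 by linarith
  qed
  then show False using ev by simp
qed

lemma partner_ex:
  assumes sg: "simple_graph V E"
    and pm: "perfect_matching (V - {a}) (induced_edges E (V - {a})) Ma"
    and x: "x \<in> V" "x \<noteq> a"
  shows "\<exists>z. {x, z} \<in> Ma \<and> z \<noteq> x"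
proof -
  obtain e where e: "e \<in> Ma" "x \<in> e" using pm_cover[OF pm] x by blast
  obtain p q where pq: "e = {p, q}" "p \<noteq> q" using pm_edge[OF sg pm e(1)] by blast
  show ?thesis
  proof (cases "x = p")
    case True then show ?thesis using e pq by blast
  next
    case False then have "x = q" using e pq by blast
    then show ?thesis using e pq by (metis insert_commute)
  qed
qed

lemma key:
  assumes sg: "simple_graph V E" and fc: "factor_critical V E" and es: "edge_stable V E"
    and x: "x \<in> V" and a: "a \<in> A" and b: "b \<in> B"
    and AB: "A \<union> B = V - {x}" "A \<inter> B = {}"
    and noedge: "\<And>u v. {u, v} \<in> E \<Longrightarrow> u \<in> A \<Longrightarrow> v \<in> B \<Longrightarrow> False"
  shows False
proof -
  have fin: "finite V" using sg unfolding simple_graph_def by blast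
  have noedge': "\<And>u v. {u, v} \<in> E \<Longrightarrow> u \<in> B \<Longrightarrow> v \<in> A \<Longrightarrow> False"
    using noedge by (metis insert_commute)
  have AB': "B \<union> A = V - {x}" "B \<inter> A = {}" using AB by blast+
  obtain Mx where Mx: "perfect_matching (V - {x}) (induced_edges E (V - {x})) Mx"
    using fc x unfolding factor_critical_def by blast
  have aV: "a \<in> V" "a \<noteq> x" and bV: "b \<in> V" "b \<noteq> x" using a b AB by blast+
  obtain Ma where Ma: "perfect_matching (V - {a}) (induced_edges E (V - {a})) Ma"
    using fc aV unfolding factor_critical_def by blast
  obtain Mb where Mb: "perfect_matching (V - {b}) (induced_edges E (V - {b})) Mb"
    using fc bV unfolding factor_critical_def by blast
  obtain z where z: "{x, z} \<in> Ma" "z \<noteq> x" using partner_ex[OF sg Ma x] aV by metis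
  obtain w where w: "{x, w} \<in> Mb" "w \<noteq> x" using partner_ex[OF sg Mb x] bV by metis
  have evA: "even (card A)" by (rule evenA[OF sg Mx AB noedge])
  have evB: "even (card B)" by (rule evenA[OF sg Mx AB' noedge'])
  have zA: "z \<in> A" by (rule partner[OF sg Ma a z AB noedge evA fin])
  have wB: "w \<in> B" by (rule partner[OF sg Mb b w AB' noedge' evB fin])
  have bw: "b \<noteq> w" using pm_sub[OF Mb w(1)] by blast
  define N1 where "N1 = {e\<in>Ma. e \<subseteq> insert x A}"
  define N2 where "N2 = {e\<in>Mb. e \<subseteq> B}"
  define N where "N = N1 \<union> N2"
  have U1: "\<Union>N1 = insert x A - {a}"
  proof
    show "\<Union>N1 \<subseteq> insert x A - {a}" using pm_sub[OF Ma] unfolding N1_def by blast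
    show "insert x A - {a} \<subseteq> \<Union>N1"
    proof
      fix v assume v: "v \<in> insert x A - {a}"
      then obtain e where e: "e \<in> Ma" "v \<in> e" using pm_cover[OF Ma] AB x by blast
      obtain p q where pq: "e = {p, q}" "e \<subseteq> V - {a}" "e \<in> E" using pm_edge[OF sg Ma e(1)] by blast
      have "e \<subseteq> insert x A"
      proof (cases "x \<in> e")
        case True
        then have "e = {x, z}" using pm_disj[OF Ma e(1) z(1)] by blast
        then show ?thesis using zA by blast
      next
        case False
        then have vA: "v \<in> A" using v e by blast
        show ?thesis
        proof (cases "v = p")
          case True
          then show ?thesis using pq AB vA noedge[of p q] False by blast
        next
          case False': False
          then have "v = q" using e pq by blast
          then show ?thesis using pq AB vA noedge'[of p q] False by blast
        qed
      qed
      then show "v \<in> \<Union>N1" using e unfolding N1_def by blast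
    qed
  qed
  have U2: "\<Union>N2 = B - {b, w}"
  proof
    show "\<Union>N2 \<subseteq> B - {b, w}"
    proof
      fix v assume "v \<in> \<Union>N2"
      then obtain e where e: "e \<in> Mb" "e \<subseteq> B" "v \<in> e" unfolding N2_def by blast
      have "e \<noteq> {x, w}" using e AB by blast
      then have "w \<notin> e" using pm_disj[OF Mb e(1) w(1)] by blast
      then show "v \<in> B - {b, w}" using e pm_sub[OF Mb e(1)] by blast
    qed
    show "B - {b, w} \<subseteq> \<Union>N2"
    proof
      fix v assume v: "v \<in> B - {b, w}"
      then obtain e where e: "e \<in> Mb" "v \<in> e" using pm_cover[OF Mb] AB by blast
      obtain p q where pq: "e = {p, q}" "e \<subseteq> V - {b}" "e \<in> E" using pm_edge[OF sg Mb e(1)] by blast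
      have xe: "x \<notin> e"
      proof
        assume "x \<in> e"
        then have "e = {x, w}" using pm_disj[OF Mb e(1) w(1)] by blast
        then show False using v e AB by blast
      qed
      have vB: "v \<in> B" using v by blast
      have "e \<subseteq> B"
      proof (cases "v = p")
        case True
        then show ?thesis using pq AB' vB noedge'[of p q] xe by blast
      next
        case False
        then have "v = q" using e pq by blast
        then show ?thesis using pq AB' vB noedge[of p q] xe by blast
      qed
      then show "v \<in> \<Union>N2" using e unfolding N2_def by blast
    qed
  qed
  have UN: "\<Union>N = V - {a, b, w}"
  proof -
    have Veq: "V = insert x (A \<union> B)" using AB x by blast
    have xn: "x \<notin> A" "x \<notin> B" using AB by blast+
    have nn: "a \<notin> B" "b \<notin> A" "w \<notin> A" using AB a b wB by blast+
    have "\<Union>N = (insert x A - {a}) \<union> (B - {b, w})" unfolding N_def Union_Un_distrib U1 U2 ..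
    also have "\<dots> = V - {a, b, w}" unfolding Veq using xn nn a b wB aV bV by auto
    finally show ?thesis .
  qed
  define E' where "E' = E - {{b, w}}"
  have eqE': "equimatchable V E'"
  proof (cases "{b, w} \<in> E")
    case True then show ?thesis using es unfolding edge_stable_def E'_def by blast
  next
    case False then have "E' = E" unfolding E'_def by blast
    then show ?thesis using es unfolding edge_stable_def by simp
  qed
  have sg': "simple_graph V E'" using sg unfolding simple_graph_def E'_def by blast
  have mN: "matching E' N"
  proof -
    have "N \<subseteq> E'"
    proof
      fix e assume e: "e \<in> N"
      then have "e \<in> E" using pm_edge[OF sg Ma] pm_edge[OF sg Mb] unfolding N_def N1_def N2_def by blast
      moreover have "e \<noteq> {b, w}" using e UN by blast
      ultimately show "e \<in> E'" unfolding E'_def by blast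
    qed
    moreover have "\<forall>e1\<in>N. \<forall>e2\<in>N. e1 \<noteq> e2 \<longrightarrow> e1 \<inter> e2 = {}"
      using pm_disj[OF Ma] pm_disj[OF Mb] AB unfolding N_def N1_def N2_def by blast
    ultimately show ?thesis unfolding matching_def by blast
  qed
  have mMb: "matching E' Mb"
  proof -
    have "Mb \<subseteq> E'"
    proof
      fix e assume e: "e \<in> Mb"
      then have "e \<in> E" using pm_edge[OF sg Mb] by blast
      moreover have "e \<noteq> {b, w}" using pm_sub[OF Mb e] by blast
      ultimately show "e \<in> E'" unfolding E'_def by blast
    qed
    then show ?thesis using pm_matching[OF Mb] unfolding matching_def by blast
  qed
  have cardN: "2 * card N = card V - 3"
  proof -
    have "2 * card N = card (V - {a, b, w})" using card_union_matching[OF sg' mN] UN by simp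
    also have "\<dots> = card V - 3"
    proof -
      have "{a, b, w} \<subseteq> V" using aV bV wB AB by blast
      moreover have "card {a, b, w} = 3"
    proof -
      have "a \<noteq> b" "a \<noteq> w" using a b wB AB by blast+
      then show ?thesis using bw by simp
    qed
      ultimately show ?thesis using fin by (simp add: card_Diff_subset)
    qed
    finally show ?thesis .
  qed
  have UMb: "\<Union>Mb = V - {b}" using Mb unfolding perfect_matching_def by blast
  have cardMb: "2 * card Mb = card V - 1"
    using card_union_matching[OF sg' mMb] UMb bV fin by simp
  have V3: "card V \<ge> 3"
  proof -
    have "{a, b, w} \<subseteq> V" using aV bV wB AB by blast
    moreover have "card {a, b, w} = 3"
    proof -
      have "a \<noteq> b" "a \<noteq> w" using a b wB AB by blast+
      then show ?thesis using bw by simp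
    qed
    ultimately show ?thesis using card_mono[OF fin] by metis
  qed
  have maxN: "maximal_matching E' N"
    unfolding maximal_matching_def
  proof (intro conjI allI impI mN)
    fix M' assume M': "matching E' M' \<and> N \<subseteq> M'"
    show "M' = N"
    proof (rule ccontr)
      assume "M' \<noteq> N"
      then obtain e where e: "e \<in> M'" "e \<notin> N" using M' by blast
      have eE': "e \<in> E'" using e M' unfolding matching_def by blast
      obtain p q where pq: "e = {p, q}" "p \<noteq> q" "p \<in> V" "q \<in> V" using sg_edge[OF sg' eE'] by blast
      have md: "\<forall>e1\<in>M'. \<forall>e2\<in>M'. e1 \<noteq> e2 \<longrightarrow> e1 \<inter> e2 = {}" using M' unfolding matching_def by blast
      have "\<forall>f\<in>N. e \<inter> f = {}"
      proof
        fix f assume f: "f \<in> N"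
        then have "f \<in> M'" "f \<noteq> e" using M' e by blast+
        then show "e \<inter> f = {}" using md e(1) by blast
      qed
      then have "e \<inter> \<Union>N = {}" by blast
      moreover have "e \<subseteq> V" using pq by blast
      ultimately have sub: "e \<subseteq> {a, b, w}" unfolding UN by blast
      have eE: "e \<in> E" and ebw: "e \<noteq> {b, w}" using eE' unfolding E'_def by blast+
      show False
      proof (cases "p = a")
        case True
        then have "q \<in> B" using sub pq wB b by blast
        then show False using noedge[of p q] True a eE pq by blast
      next
        case False
        show False
        proof (cases "q = a")
          case True
          then have "p \<in> B" using sub pq wB b False by blast
          then show False using noedge'[of p q] True a eE pq by blast
        next
          case False': False
          then have "e = {b, w}" using sub pq False by auto
          then show False using ebw by blast
        qed
      qed
    qed
  qed
  have maxMb: "maximal_matching E' Mb"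
    unfolding maximal_matching_def
  proof (intro conjI allI impI mMb)
    fix M' assume M': "matching E' M' \<and> Mb \<subseteq> M'"
    have "\<Union>M' \<subseteq> V" using M' sg_edge[OF sg'] unfolding matching_def by blast
    then have "card (\<Union>M') \<le> card V" by (rule card_mono[OF fin])
    then have "2 * card M' \<le> card V" using card_union_matching[OF sg'] M' by simp
    then have le: "card M' \<le> card Mb" using cardMb V3 by linarith
    have "M' \<subseteq> E'" using M' unfolding matching_def by blast
    then have "finite M'" using sg_finE[OF sg'] by (rule finite_subset)
    then show "M' = Mb" using M' le card_seteq[of M' Mb] by simp
  qed
  have "card N = card Mb" using eqE' maxN maxMb unfolding equimatchable_def by blast
  then show False using cardN cardMb V3 by linarith
qed

theorem corollary3p9:
  fixes V :: "'a set" and E :: "'a set set"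
  assumes "simple_graph V E"
    and "card V \<ge> 2"
    and "factor_critical V E"
    and "equimatchable V E"
    and "edge_stable V E"
  shows "two_connected V E"
proof -
  note sg = assms(1) and fc = assms(3) and es = assms(5)
  have fin: "finite V" using sg unfolding simple_graph_def by blast
  have Vne: "V \<noteq> {}" using assms(2) by auto
  then obtain x0 where x0: "x0 \<in> V" by blast
  obtain M0 where M0: "perfect_matching (V - {x0}) (induced_edges E (V - {x0})) M0"
    using fc x0 unfolding factor_critical_def by blast
  have "card (V - {x0}) = 2 * card M0"
    using card_union_matching[OF sg pm_matching[OF M0]] M0 unfolding perfect_matching_def by simp
  then have V3: "card V \<ge> 3" using assms(2) fin x0 by (simp add: card_Diff_singleton) presburger
  have conn: "connected (V - {x}) (induced_edges E (V - {x}))" if x: "x \<in> V" for x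
  proof -
    define F where "F = induced_edges E (V - {x})"
    have ne: "V - {x} \<noteq> {}"
    proof
      assume "V - {x} = {}"
      then have "V \<subseteq> {x}" by blast
      then have "card V \<le> 1" using card_mono[of "{x}" V] by simp
      then show False using V3 by simp
    qed
    show ?thesis unfolding F_def[symmetric] connected_def
    proof (intro conjI ne ballI, rule ccontr)
      fix u v assume u: "u \<in> V - {x}" and v: "v \<in> V - {x}" and nr: "\<not> (adj F)\<^sup>*\<^sup>* u v"
      define A where "A = {y \<in> V - {x}. (adj F)\<^sup>*\<^sup>* u y}"
      define B where "B = V - {x} - A"
      have uA: "u \<in> A" using u unfolding A_def by blast
      have vB: "v \<in> B" using v nr unfolding A_def B_def by blast
      have AB: "A \<union> B = V - {x}" "A \<inter> B = {}" unfolding A_def B_def by blast+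
      have noedge: "\<And>p q. {p, q} \<in> E \<Longrightarrow> p \<in> A \<Longrightarrow> q \<in> B \<Longrightarrow> False"
      proof -
        fix p q assume pq: "{p, q} \<in> E" "p \<in> A" "q \<in> B"
        then have "{p, q} \<in> F" unfolding F_def induced_edges_def A_def B_def by blast
        then have "adj F p q" unfolding adj_def .
        then have "(adj F)\<^sup>*\<^sup>* u q" using pq(2) unfolding A_def
          by (metis (no_types, lifting) mem_Collect_eq rtranclp.rtrancl_into_rtrancl)
        then show False using pq(3) unfolding A_def B_def by blast
      qed
      show False by (rule key[OF sg fc es x uA vB AB noedge])
    qed
  qed
  have nb: "\<exists>z. {x0, z} \<in> E \<and> z \<in> V \<and> z \<noteq> x0"
  proof -
    have "V - {x0} \<noteq> {}"
    proof
      assume "V - {x0} = {}"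
      then have "V \<subseteq> {x0}" by blast
      then have "card V \<le> 1" using card_mono[of "{x0}" V] by simp
      then show False using V3 by simp
    qed
    then obtain a where a: "a \<in> V" "a \<noteq> x0" by blast
    obtain Ma where Ma: "perfect_matching (V - {a}) (induced_edges E (V - {a})) Ma"
      using fc a unfolding factor_critical_def by blast
    obtain z where z: "{x0, z} \<in> Ma" "z \<noteq> x0" using partner_ex[OF sg Ma x0] a by metis
    show ?thesis using z pm_edge[OF sg Ma z(1)] pm_sub[OF Ma z(1)] by blast
  qed
  then obtain z where z: "{x0, z} \<in> E" "z \<in> V" "z \<noteq> x0" by blast
  have lift: "(adj E)\<^sup>*\<^sup>* p q" if "p \<in> V - {x0}" "q \<in> V - {x0}" for p q
  proof -
    have "(adj (induced_edges E (V - {x0})))\<^sup>*\<^sup>* p q"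
      using conn[OF x0] that unfolding connected_def by blast
    moreover have "adj (induced_edges E (V - {x0})) \<le> adj E"
      unfolding adj_def induced_edges_def by auto
    ultimately show ?thesis using rtranclp_mono by blast
  qed
  have zx: "adj E z x0" "adj E x0 z" using z unfolding adj_def by (auto simp: insert_commute)
  have conV: "connected V E"
    unfolding connected_def
  proof (intro conjI Vne ballI)
    fix p q assume p: "p \<in> V" and q: "q \<in> V"
    have toz: "(adj E)\<^sup>*\<^sup>* p z" if "p \<in> V" for p
    proof (cases "p = x0")
      case True then show ?thesis using zx by blast
    next
      case False then show ?thesis using lift[of p z] that z by blast
    qed
    have fromz: "(adj E)\<^sup>*\<^sup>* z q" if "q \<in> V" for q
    proof (cases "q = x0")
      case True then show ?thesis using zx by blast
    next
      case False then show ?thesis using lift[of z q] that z by blast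
    qed
    show "(adj E)\<^sup>*\<^sup>* p q" using toz[OF p] fromz[OF q] by (rule rtranclp_trans)
  qed
  show ?thesis unfolding two_connected_def using V3 conV conn by blast
qed

end
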